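(* Fix $L\in\mathbb R$. There are $c>0$ and $C\in\mathbb R$ such that for all $n$ large enough $$|Q^{(n)}_L(x,\xi)|\le Ce^{-c(x+\xi)}$$ for all $x\ge0$ and $\xi\in\mathbb R$.
   Context: $q_s^{(n)}(y)=\frac1{2\pi i}\oint_{\Gamma_0}\frac{dw}{w}w^y(1-w)^{n-s}(1+1/w)^s$, $\Gamma_0$ a small counterclockwise circle around $0$. $b_n(\tau)=n(1+1/\sqrt2)+2^{-1/6}\tau n^{2/3}$. Scaling (integer parts neglected): $i=2^{-5/6}xn^{1/3}$, $u=n/\sqrt2+2^{-5/6}\xi n^{1/3}$. $Q^{(n)}_L(x,\xi)=2^{-5/6}n^{1/3}2^{-n/2}(\sqrt2+1)^{i+2^{-5/6}\xi n^{1/3}-2^{-1/6}Ln^{2/3}}q^{(n)}_{b_n(L)/2}(u+i)$. *)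

theory Defs
  imports "HOL-Complex_Analysis.Complex_Analysis"
begin

text \<open>The radius 1/2 is "small": the integrand
  is holomorphic on the punctured disc of radius 1 (the only other possible pole is w = 1).\<close>
definition q :: "nat \<Rightarrow> int \<Rightarrow> int \<Rightarrow> complex" where
  "q n s y = contour_integral (circlepath 0 (1/2))
      (\<lambda>w. w powi y * (1 - w) powi (int n - s) * (1 + 1 / w) powi s / w) / (2 * pi * \<i>)"

definition b :: "nat \<Rightarrow> real \<Rightarrow> real" where
  "b n \<tau> = real n * (1 + 1 / sqrt 2) + 2 powr (-1/6) * \<tau> * real n powr (2/3)"

definition iidx :: "nat \<Rightarrow> real \<Rightarrow> int" where
  "iidx n x = \<lfloor>2 powr (-5/6) * x * real n powr (1/3)\<rfloor>"

definition uidx :: "nat \<Rightarrow> real \<Rightarrow> int" where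
  "uidx n \<xi> = \<lfloor>real n / sqrt 2 + 2 powr (-5/6) * \<xi> * real n powr (1/3)\<rfloor>"

definition Q :: "nat \<Rightarrow> real \<Rightarrow> real \<Rightarrow> real \<Rightarrow> complex" where
  "Q n L x \<xi> = complex_of_real
      (2 powr (-5/6) * real n powr (1/3) * 2 powr (- real n / 2) *
       (sqrt 2 + 1) powr (real_of_int (iidx n x) + 2 powr (-5/6) * \<xi> * real n powr (1/3)
                           - 2 powr (-1/6) * L * real n powr (2/3)))
     * q n \<lfloor>b n L / 2\<rfloor> (uidx n \<xi> + iidx n x)"

end

theory Submission
  imports Defs
begin



lemma sin_lower:
  fixes x :: real assumes "0 \<le> x" "x \<le> pi/2"
  shows "x/3 \<le> sin x"
proof -
  have b: "\<bar>sin x - (\<Sum>m<4. sin_coeff m * x ^ m)\<bar> \<le> inverse (fact 4) * \<bar>x\<bar> ^ 4"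
    by (rule Maclaurin_sin_bound)
  have s: "(\<Sum>m<4. sin_coeff m * x ^ m) = x - x^3/6"
  proof -
    have c: "sin_coeff 0 = 0" "sin_coeff 1 = 1" "sin_coeff 2 = 0" "sin_coeff 3 = -1/6"
      by (simp_all add: sin_coeff_def fact_numeral)
    have "(\<Sum>m<4. sin_coeff m * x ^ m) = sin_coeff 0 * x^0 + sin_coeff 1 * x^1 + sin_coeff 2 * x^2 + sin_coeff 3 * x^3"
      by (simp add: lessThan_nat_numeral)
    then show ?thesis using c by simp
  qed
  have 1: "x - x^3/6 - x^4/24 \<le> sin x" using b s by (simp add: fact_numeral abs_if split: if_splits)
  have 2: "x \<le> 8/5"
  proof -
    have "pi \<le> 16/5" using pi_approx by simp
    then show ?thesis using assms by linarith
  qed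
  have 3: "x^2 \<le> 64/25"
  proof -
    have "x^2 \<le> (8/5)^2" using assms 2 by (intro power_mono) auto
    then show ?thesis by (simp add: power_divide)
  qed
  have 4: "x^3 \<le> 512/125"
  proof -
    have "x^3 \<le> (8/5)^3" using assms 2 by (intro power_mono) auto
    then show ?thesis by (simp add: power_divide)
  qed
  have 5: "x^3 \<le> 64/25 * x"
  proof -
    have "x^3 = x^2 * x" by (simp add: power_numeral_reduce)
    also have "\<dots> \<le> 64/25 * x" using 3 assms by (intro mult_right_mono) auto
    finally show ?thesis .
  qed
  have 6: "x^4 \<le> 512/125 * x"
  proof -
    have "x^4 = x^3 * x" by (simp add: power_numeral_reduce)
    also have "\<dots> \<le> 512/125 * x" using 4 assms by (intro mult_right_mono) auto
    finally show ?thesis .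
  qed
  show ?thesis using 1 5 6 assms by linarith
qed

lemma sin_pi_lower:
  fixes t :: real assumes "0 \<le> t" "t \<le> 1"
  shows "min t (1-t) \<le> sin (pi * t)"
proof (cases "t \<le> 1/2")
  case True
  have "pi*t/3 \<le> sin (pi*t)" using assms True by (intro sin_lower) (auto simp: field_simps)
  moreover have "t \<le> pi*t/3" using mult_right_mono[of 3 pi t] assms pi_gt3 by (simp add: field_simps)
  ultimately show ?thesis by linarith
next
  case False
  have "pi*(1-t)/3 \<le> sin (pi*(1-t))" using assms False by (intro sin_lower) (auto simp: field_simps)
  moreover have "sin (pi*(1-t)) = sin (pi * t)" by (simp add: right_diff_distrib sin_diff)
  moreover have "1-t \<le> pi*(1-t)/3" using mult_right_mono[of 3 pi "1-t"] assms pi_gt3 by (simp add: field_simps)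
  ultimately show ?thesis by linarith
qed

lemma J_bound:
  fixes K :: real assumes K: "K > 0"
  shows "(\<lambda>t. exp (- K * (1 - cos (2*pi*t)))) integrable_on {0..1}"
    "integral {0..1} (\<lambda>t. exp (- K * (1 - cos (2*pi*t)))) \<le> 4 / sqrt K"
proof -
  show int1: "(\<lambda>t. exp (- K * (1 - cos (2*pi*t)))) integrable_on {0..1}"
    by (intro integrable_continuous_real continuous_intros)
  define a where "a = 2*K"
  have a: "a > 0" using K by (simp add: a_def)
  define g where "g t = 1/(1+a*t^2) + 1/(1+a*(1-t)^2)" for t :: real
  define G where "G t = (arctan (sqrt a * t) - arctan (sqrt a * (1-t))) * inverse (sqrt a)" for t :: real
  have der: "(G has_vector_derivative g x) (at x within {0..1})" for x
  proof -
    have "(G has_real_derivative g x) (at x)"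
      unfolding G_def g_def
      apply (rule derivative_eq_intros refl)+
      using a apply (simp only: power_mult_distrib real_sqrt_pow2 less_imp_le)
      using a by (simp add: field_simps)
    then show ?thesis
      by (simp add: has_real_derivative_iff_has_vector_derivative has_vector_derivative_at_within)
  qed
  have hi: "(g has_integral (G 1 - G 0)) {0..1}"
    by (rule fundamental_theorem_of_calculus) (auto intro: der)
  have "G 1 - G 0 = 2 * arctan (sqrt a) / sqrt a" by (simp add: G_def field_simps)
  also have "\<dots> \<le> 2 * (pi/2) / sqrt a"
    using arctan_ubound[of "sqrt a"] a by (intro divide_right_mono) auto
  also have "\<dots> = pi / sqrt (2*K)" by (simp add: a_def)
  also have "\<dots> \<le> 4 / sqrt K"
  proof -
    have "sqrt K \<le> sqrt (2*K)" using K by simp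
    then have "pi / sqrt (2*K) \<le> pi / sqrt K" using K by (intro divide_left_mono) auto
    also have "\<dots> \<le> 4 / sqrt K" using pi_less_4 K by (intro divide_right_mono) auto
    finally show ?thesis .
  qed
  finally have Gle: "G 1 - G 0 \<le> 4 / sqrt K" .
  have le: "exp (- K * (1 - cos (2*pi*t))) \<le> g t" if t: "t \<in> {0..1}" for t
  proof -
    define \<mu> where "\<mu> = min t (1-t)"
    have mu0: "0 \<le> \<mu>" using t by (auto simp: \<mu>_def)
    have "\<mu> \<le> sin (pi*t)" using t sin_pi_lower by (auto simp: \<mu>_def)
    then have "\<mu>^2 \<le> (sin (pi*t))^2" using mu0 by (intro power_mono) auto
    moreover have "1 - cos (2*pi*t) = 2 * (sin (pi*t))^2"
      using cos_double_sin[of "pi*t"] by (simp add: mult.assoc)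
    ultimately have tau: "2*\<mu>^2 \<le> 1 - cos (2*pi*t)" by simp
    have "exp (- K * (1 - cos (2*pi*t))) \<le> exp (- K * (2*\<mu>^2))"
      using tau K by simp
    also have "\<dots> = 1 / exp (a*\<mu>^2)" by (simp add: a_def exp_minus field_simps)
    also have "\<dots> \<le> 1 / (1 + a*\<mu>^2)"
      using a mu0 exp_ge_add_one_self[of "a*\<mu>^2"] by (intro divide_left_mono) (auto intro!: mult_pos_pos add_pos_nonneg)
    also have "\<dots> \<le> g t"
    proof (cases "t \<le> 1 - t")
      case True
      then have "\<mu> = t" by (simp add: \<mu>_def)
      then show ?thesis using a by (simp add: g_def add_nonneg_nonneg)
    next
      case False
      then have "\<mu> = 1-t" by (simp add: \<mu>_def)
      then show ?thesis using a by (simp add: g_def add_nonneg_nonneg)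
    qed
    finally show ?thesis .
  qed
  have "integral {0..1} (\<lambda>t. exp (- K * (1 - cos (2*pi*t)))) \<le> integral {0..1} g"
    using int1 hi le by (intro integral_le) auto
  also have "\<dots> = G 1 - G 0" using hi by (rule integral_unique)
  finally show "integral {0..1} (\<lambda>t. exp (- K * (1 - cos (2*pi*t)))) \<le> 4 / sqrt K"
    using Gle by linarith
qed



lemma q_bound:
  fixes n :: nat and s y :: int and r :: real and g :: "real \<Rightarrow> real"
  assumes s0: "0 \<le> s" and sn: "s \<le> int n" and r0: "0 < r" and r1: "r \<le> 1/2"
    and gint: "g integrable_on {0..1}"
    and gle: "\<And>t. t \<in> {0..1} \<Longrightarrow>
       norm (1 - r * exp (2 * of_real pi * \<i> * of_real t)) ^ nat (int n - s) *
       norm (1 + r * exp (2 * of_real pi * \<i> * of_real t)) ^ nat s \<le> g t"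
  shows "norm (q n s y) \<le> r powr (real_of_int (y - s)) * integral {0..1} g"
proof -
  define m where "m = nat (int n - s)"
  define k where "k = nat s"
  have mk: "int m = int n - s" "int k = s" using s0 sn by (auto simp: m_def k_def)
  define f where "f = (\<lambda>w::complex. w powi y * (1 - w) powi (int n - s) * (1 + 1 / w) powi s / w)"
  define F where "F = (\<lambda>w::complex. w powi (y - s - 1) * (1 - w) ^ m * (1 + w) ^ k)"
  have fF: "f w = F w" if w: "w \<noteq> 0" for w
  proof -
    have a: "(1 - w) powi (int n - s) = (1 - w) ^ m" by (simp flip: mk(1))
    have b: "(1 + 1 / w) powi s = (1 + w) ^ k / w ^ k"
    proof -
      have "(1 + 1 / w) powi s = ((1 + w) / w) ^ k" using w by (simp flip: mk(2) add: field_simps)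
      then show ?thesis by (simp add: power_divide)
    qed
    have c: "w powi (y - s - 1) = w powi y / w ^ k / w"
      using w by (simp add: power_int_diff flip: mk(2))
    show ?thesis unfolding f_def F_def a b c by (simp add: field_simps)
  qed
  have "q n s y = contour_integral (circlepath 0 (1/2)) f / (2 * pi * \<i>)"
    by (simp add: q_def f_def)
  also have "contour_integral (circlepath 0 (1/2)) f = contour_integral (circlepath 0 (1/2)) F"
    by (rule contour_integral_cong) (auto intro!: fF)
  also have "\<dots> = contour_integral (circlepath 0 r) F"
  proof (rule contour_integral_circlepath_eq(3)[of "ball 0 1"])
    show "F holomorphic_on ball 0 1 - {0}" unfolding F_def
      by (intro holomorphic_intros) auto
  qed (use r0 r1 in auto)
  also have "\<dots> = integral {0..1} (\<lambda>t. F (r * exp (2 * of_real pi * \<i> * of_real t)) *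
        (2 * pi * \<i> * r * exp (2 * of_real pi * \<i> * t)))"
    unfolding contour_integral_integral vector_derivative_circlepath by (simp add: circlepath)
  finally have qeq: "q n s y = integral {0..1} (\<lambda>t. F (r * exp (2 * of_real pi * \<i> * of_real t)) *
        (2 * pi * \<i> * r * exp (2 * of_real pi * \<i> * t))) / (2 * pi * \<i>)" .
  define h where "h = (\<lambda>t. F (r * exp (2 * of_real pi * \<i> * of_real t)) *
        (2 * pi * \<i> * r * exp (2 * of_real pi * \<i> * t)))"
  have hint: "h integrable_on {0..1}"
    unfolding h_def F_def
    by (intro integrable_continuous_real continuous_intros) (use r0 in auto)
  have hle: "norm (h t) \<le> 2 * pi * r powr (real_of_int (y - s)) * g t" if t: "t \<in> {0..1}" for t
  proof -
    define w where "w = r * exp (2 * of_real pi * \<i> * of_real t)"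
    have nw: "norm w = r" using r0 by (simp add: w_def norm_mult)
    have ne: "norm (exp (2 * of_real pi * \<i> * of_real t)) = 1" by simp
    have "norm (h t) = norm (w powi (y - s - 1)) * (norm (1 - w) ^ m * norm (1 + w) ^ k) * (2 * pi * r)"
      unfolding h_def F_def w_def[symmetric] using r0 by (simp add: norm_mult norm_power)
    also have "norm (w powi (y - s - 1)) = r powr (real_of_int (y - s - 1))"
      using r0 powr_real_of_int'[of r "y - s - 1"] by (simp add: norm_power_int nw)
    also have "r powr (real_of_int (y - s - 1)) * (norm (1 - w) ^ m * norm (1 + w) ^ k) * (2 * pi * r)
        = 2 * pi * (r powr (real_of_int (y - s - 1)) * r) * (norm (1 - w) ^ m * norm (1 + w) ^ k)"
      by (simp add: algebra_simps)
    also have "r powr (real_of_int (y - s - 1)) * r = r powr (real_of_int (y - s))"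
      using r0 by (simp add: powr_diff)
    also have "2 * pi * r powr (real_of_int (y - s)) * (norm (1 - w) ^ m * norm (1 + w) ^ k)
        \<le> 2 * pi * r powr (real_of_int (y - s)) * g t"
      using gle[OF t] by (intro mult_left_mono) (auto simp: w_def m_def k_def)
    finally show ?thesis .
  qed
  have "norm (integral {0..1} h) \<le> integral {0..1} (\<lambda>t. 2 * pi * r powr (real_of_int (y - s)) * g t)"
    using hint integrable_on_cmult_left[OF gint, of "2 * pi * r powr (real_of_int (y - s))"] hle
    by (intro integral_norm_bound_integral) auto
  also have "\<dots> = 2 * pi * r powr (real_of_int (y - s)) * integral {0..1} g"
    by simp
  finally have "norm (integral {0..1} h) \<le> 2 * pi * (r powr (real_of_int (y - s)) * integral {0..1} g)"
    by simp
  moreover have "norm (q n s y) = norm (integral {0..1} h) / (2 * pi)"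
    unfolding qeq h_def by (simp add: norm_divide norm_mult)
  ultimately have "2 * pi * norm (q n s y) \<le> 2 * pi * (r powr (real_of_int (y - s)) * integral {0..1} g)"
    by simp
  moreover have "0 < 2 * pi" using pi_gt_zero by simp
  ultimately show ?thesis using mult_le_cancel_left_pos by blast
qed



lemma pw_bound:
  fixes r t :: real and m k :: nat
  assumes r0: "0 < r" and r1: "r < 1"
  shows "norm (1 - r * exp (2 * of_real pi * \<i> * of_real t)) ^ m *
         norm (1 + r * exp (2 * of_real pi * \<i> * of_real t)) ^ k
       \<le> (1-r)^m * (1+r)^k * exp (r * (1 - cos (2*pi*t)) * (m*(1+r)^2 - k*(1-r)^2) / (1-r^2)^2)"
proof -
  define \<theta> where "\<theta> = 2*pi*t"
  define \<tau> where "\<tau> = 1 - cos \<theta>"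
  have e: "exp (2 * of_real pi * \<i> * of_real t) = Complex (cos \<theta>) (sin \<theta>)"
  proof -
    have "exp (2 * of_real pi * \<i> * of_real t) = cis \<theta>" by (simp add: cis_conv_exp \<theta>_def mult_ac)
    also have "\<dots> = Complex (cos \<theta>) (sin \<theta>)" by (simp add: complex_eq_iff)
    finally show ?thesis .
  qed
  have A: "norm (1 - r * exp (2 * of_real pi * \<i> * of_real t)) ^ 2 = (1-r)^2 + 2*r*\<tau>"
  proof -
    have "1 - r * exp (2 * of_real pi * \<i> * of_real t) = Complex (1 - r * cos \<theta>) (- r * sin \<theta>)"
      unfolding e by (simp add: complex_eq_iff)
    then have "norm (1 - r * exp (2 * of_real pi * \<i> * of_real t)) ^ 2 = (1 - r * cos \<theta>)^2 + (r * sin \<theta>)^2"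
      by (simp add: cmod_power2)
    also have "\<dots> = (1-r)^2 + 2*r*\<tau>"
    proof -
      have ss: "(r * sin \<theta>)^2 = r^2 - (r*cos \<theta>)^2" by (simp add: power_mult_distrib sin_squared_eq algebra_simps)
      show ?thesis unfolding ss by (simp add: \<tau>_def power2_eq_square algebra_simps)
    qed
    finally show ?thesis .
  qed
  have B: "norm (1 + r * exp (2 * of_real pi * \<i> * of_real t)) ^ 2 = (1+r)^2 - 2*r*\<tau>"
  proof -
    have "1 + r * exp (2 * of_real pi * \<i> * of_real t) = Complex (1 + r * cos \<theta>) (r * sin \<theta>)"
      unfolding e by (simp add: complex_eq_iff)
    then have "norm (1 + r * exp (2 * of_real pi * \<i> * of_real t)) ^ 2 = (1 + r * cos \<theta>)^2 + (r * sin \<theta>)^2"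
      by (simp add: cmod_power2)
    also have "\<dots> = (1+r)^2 - 2*r*\<tau>"
    proof -
      have ss: "(r * sin \<theta>)^2 = r^2 - (r*cos \<theta>)^2" by (simp add: power_mult_distrib sin_squared_eq algebra_simps)
      show ?thesis unfolding ss by (simp add: \<tau>_def power2_eq_square algebra_simps)
    qed
    finally show ?thesis .
  qed
  define a where "a = norm (1 - r * exp (2 * of_real pi * \<i> * of_real t))"
  define b where "b = norm (1 + r * exp (2 * of_real pi * \<i> * of_real t))"
  have p1: "(1-r)^2 > 0" "(1+r)^2 > 0" using r0 r1 by auto
  have A2: "a^2 \<le> (1-r)^2 * exp (2*r*\<tau>/(1-r)^2)"
  proof -
    have "(1-r)^2 * (1 + 2*r*\<tau>/(1-r)^2) = (1-r)^2 + 2*r*\<tau>" using p1 by (simp add: field_simps)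
    then have "a^2 = (1-r)^2 * (1 + 2*r*\<tau>/(1-r)^2)" using A by (simp add: a_def)
    also have "\<dots> \<le> (1-r)^2 * exp (2*r*\<tau>/(1-r)^2)"
      using p1 exp_ge_add_one_self[of "2*r*\<tau>/(1-r)^2"] by (intro mult_left_mono) (auto simp: add.commute)
    finally show ?thesis .
  qed
  have B2: "b^2 \<le> (1+r)^2 * exp (- (2*r*\<tau>/(1+r)^2))"
  proof -
    have "(1+r)^2 * (1 + - (2*r*\<tau>/(1+r)^2)) = (1+r)^2 - 2*r*\<tau>" using p1 by (simp add: field_simps)
    then have "b^2 = (1+r)^2 * (1 + - (2*r*\<tau>/(1+r)^2))" using B by (simp add: b_def)
    also have "\<dots> \<le> (1+r)^2 * exp (- (2*r*\<tau>/(1+r)^2))"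
      using p1 exp_ge_add_one_self[of "- (2*r*\<tau>/(1+r)^2)"] by (intro mult_left_mono) (auto simp: add.commute)
    finally show ?thesis .
  qed
  have "(a^m * b^k)^2 = (a^2)^m * (b^2)^k" by (simp add: power_mult_distrib flip: power_mult) (simp add: mult.commute)
  also have "\<dots> \<le> ((1-r)^2 * exp (2*r*\<tau>/(1-r)^2))^m * ((1+r)^2 * exp (- (2*r*\<tau>/(1+r)^2)))^k"
    using A2 B2 by (intro mult_mono power_mono) auto
  also have "\<dots> = ((1-r)^m * (1+r)^k)^2 * exp (2 * (r * \<tau> * (m*(1+r)^2 - k*(1-r)^2) / (1-r^2)^2))"
  proof -
    have E1: "((1-r)^2 * exp (2*r*\<tau>/(1-r)^2))^m * ((1+r)^2 * exp (- (2*r*\<tau>/(1+r)^2)))^k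
       = ((1-r)^m * (1+r)^k)^2 * ((exp (2*r*\<tau>/(1-r)^2))^m * (exp (- (2*r*\<tau>/(1+r)^2)))^k)"
      by (simp add: power_mult_distrib flip: power_mult) (simp add: mult.commute)
    have E2: "(exp (2*r*\<tau>/(1-r)^2))^m * (exp (- (2*r*\<tau>/(1+r)^2)))^k
        = exp (m * (2*r*\<tau>/(1-r)^2) + k * (- (2*r*\<tau>/(1+r)^2)))"
      by (simp only: exp_add exp_of_nat_mult)
    have E3: "m * (2*r*\<tau>/(1-r)^2) + k * (- (2*r*\<tau>/(1+r)^2))
        = 2 * (r * \<tau> * (m*(1+r)^2 - k*(1-r)^2) / (1-r^2)^2)"
    proof -
      have "(1-r^2)^2 = (1-r)^2 * (1+r)^2" by (simp add: power2_eq_square algebra_simps)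
      then show ?thesis using p1 by (simp add: field_simps)
    qed
    show ?thesis unfolding E1 E2 E3 by simp
  qed
  also have "\<dots> = ((1-r)^m * (1+r)^k * exp (r * \<tau> * (m*(1+r)^2 - k*(1-r)^2) / (1-r^2)^2))^2"
    by (simp add: power_mult_distrib exp_double[symmetric] flip: exp_add)
  finally have "(a^m * b^k)^2 \<le> ((1-r)^m * (1+r)^k * exp (r * \<tau> * (m*(1+r)^2 - k*(1-r)^2) / (1-r^2)^2))^2" .
  then have "a^m * b^k \<le> (1-r)^m * (1+r)^k * exp (r * \<tau> * (m*(1+r)^2 - k*(1-r)^2) / (1-r^2)^2)"
    by (rule power2_le_imp_le) (use r1 r0 in simp)
  then show ?thesis by (simp add: a_def b_def \<tau>_def \<theta>_def)
qed



lemma sqrt2_bounds: "141/100 \<le> sqrt (2::real)" "sqrt (2::real) \<le> 142/100"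
proof -
  have "(141/100)^2 \<le> (2::real)" by (simp add: power2_eq_square)
  then show "141/100 \<le> sqrt (2::real)" by (rule real_le_rsqrt)
  have "(2::real) \<le> (142/100)^2" by (simp add: power2_eq_square)
  then show "sqrt (2::real) \<le> 142/100" by (intro real_le_lsqrt) auto
qed

lemma s2: "sqrt 2 * sqrt 2 = (2::real)" "sqrt 2 * (sqrt 2 * x) = 2 * (x::real)"
  by (simp_all add: mult.assoc[symmetric])

lemma id_M: "4*((nn - ss)*(1+r)^2 - ss*(1-r)^2) = -2*nn* sqrt 2*((sqrt 2-1) - r)*(sqrt 2+1-r) - 2*(4* ss - (2+sqrt 2)*nn)*(1+r^2)"
  by (simp add: algebra_simps power2_eq_square s2)

lemma id_N: "4*(-(2* ss - nn* sqrt 2)*(1-z^2) - 2*(nn - ss)*z*(1+z) + 2* ss*z*(1-z)) = 2*((sqrt 2-1) - z)*(-(nn*(2+sqrt 2)*((sqrt 2-1) - z) + (4* ss - (2+sqrt 2)*nn)*(z+1+sqrt 2)))"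
  by (simp add: algebra_simps power2_eq_square s2)

lemma id_D: assumes "z \<noteq> 0" "z \<noteq> 1" "z \<noteq> -1"
  shows "(-A/z - B/(1-z) + C/(1+z))*(z*(1-z^2)) = -A*(1-z^2) - B*z*(1+z) + C*z*(1-z::real)"
proof -
  have e: "z*(1-z^2) = z*((1-z)*(1+z))" by (simp add: algebra_simps power2_eq_square)
  have n: "1 - z \<noteq> 0" "1 + z \<noteq> 0" using assms by auto
  have t1: "(-A/z) * (z*((1-z)*(1+z))) = -A*(1-z^2)" using assms by (simp add: power2_eq_square algebra_simps)
  have t2: "(B/(1-z)) * (z*((1-z)*(1+z))) = B*z*(1+z)" using n by simp
  have t3: "(C/(1+z)) * (z*((1-z)*(1+z))) = C*z*(1-z)" using n by simp
  show ?thesis unfolding e using t1 t2 t3 by (simp add: algebra_simps)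
qed

lemma deriv_W: assumes "0 < x" "x < (1::real)"
  shows "DERIV (\<lambda>\<rho>. A * (c0 - ln \<rho>) + B * (ln (1 - \<rho>) - c1) + C * (ln (1 + \<rho>) - c2)) x :> (- A / x - B / (1 - x) + C / (1 + x))"
proof -
  have d0: "DERIV ln x :> inverse x" using assms(1) by (rule DERIV_ln)
  have d1: "DERIV (\<lambda>\<rho>. ln (1 - \<rho>)) x :> inverse (1 - x) * (0 - 1)"
    using assms by (intro DERIV_chain2[OF DERIV_ln] DERIV_diff DERIV_const DERIV_ident) auto
  have d2: "DERIV (\<lambda>\<rho>. ln (1 + \<rho>)) x :> inverse (1 + x) * (0 + 1)"
    using assms by (intro DERIV_chain2[OF DERIV_ln] DERIV_add DERIV_const DERIV_ident) auto
  have "DERIV (\<lambda>\<rho>. A * (c0 - ln \<rho>) + B * (ln (1 - \<rho>) - c1) + C * (ln (1 + \<rho>) - c2)) x :>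
     A * (0 - inverse x) + B * (inverse (1 - x) * (0 - 1) - 0) + C * (inverse (1 + x) * (0 + 1) - 0)"
    by (intro DERIV_add DERIV_cmult DERIV_diff DERIV_const d0 d1 d2)
  then show ?thesis by (simp add: field_simps)
qed

lemma W_bound:
  fixes nn ss h :: real
  defines "rc \<equiv> sqrt 2 - 1"
  assumes ss0: "0 \<le> ss" and mm0: "ss \<le> nn" and h0: "0 < h" and h1: "h \<le> 1"
  shows "(ss - nn / sqrt 2) * h + (nn - ss) * (ln (1 - rc * exp (-h)) - ln (1 - rc))
          + ss * (ln (1 + rc * exp (-h)) - ln (1 + rc))
        \<le> 10 * h^2 * (nn * h + 3 * \<bar>ss - (2 + sqrt 2) / 4 * nn\<bar>)"
proof -
  define r where "r = rc * exp (-h)"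
  define \<epsilon> where "\<epsilon> = ss - (2 + sqrt 2) / 4 * nn"
  have rcb: "41/100 \<le> rc" "rc \<le> 42/100" using sqrt2_bounds by (auto simp: rc_def)
  have eh: "exp (-1) \<le> exp (-h)" "exp (-h) < 1" using h0 h1 by auto
  have e1: "1/3 \<le> exp (-1::real)" using exp_le by (simp add: exp_minus field_simps)
  have rlo: "1/8 \<le> r" 
  proof -
    have "1/3 \<le> exp (-h)" using eh e1 by linarith
    then have "41/100 * (1/3) \<le> rc * exp (-h)" using rcb by (intro mult_mono) auto
    then show ?thesis by (simp add: r_def)
  qed
  have rlt: "r < rc" using rcb eh by (simp add: r_def)
  have dle: "rc - r \<le> h"
  proof -
    have "1 - h \<le> exp (-h)" using exp_ge_add_one_self[of "-h"] by simp
    then have "rc * (1 - exp (-h)) \<le> 1 * h" using rcb h0 eh by (intro mult_mono) auto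
    then show ?thesis by (simp add: r_def algebra_simps)
  qed
  define Wf where "Wf \<rho> = (ss - nn / sqrt 2) * (ln rc - ln \<rho>) + (nn - ss) * (ln (1 - \<rho>) - ln (1 - rc))
          + ss * (ln (1 + \<rho>) - ln (1 + rc))" for \<rho>
  define Wd where "Wd \<rho> = - (ss - nn / sqrt 2) / \<rho> - (nn - ss) / (1 - \<rho>) + ss / (1 + \<rho>)" for \<rho>
  have der: "DERIV Wf x :> Wd x" if "r \<le> x" "x \<le> rc" for x
  proof -
    have x: "0 < x" "x < 1" using that rlo rcb by auto
    show ?thesis unfolding Wf_def Wd_def using deriv_W[OF x] .
  qed
  obtain z where z: "r < z" "z < rc" "Wf rc - Wf r = (rc - r) * Wd z"
    using MVT2[OF rlt der] by blast
  have Wrc: "Wf rc = 0" by (simp add: Wf_def)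
  have lnr: "ln rc - ln r = h" using rcb by (simp add: r_def ln_mult)
  have target: "Wf r = (ss - nn / sqrt 2) * h + (nn - ss) * (ln (1 - rc * exp (-h)) - ln (1 - rc))
          + ss * (ln (1 + rc * exp (-h)) - ln (1 + rc))"
    unfolding Wf_def lnr by (simp add: r_def)
  have zb: "1/8 < z" "z < 1" using z rlo rcb by auto
  define X where "X = - (nn * (2 + sqrt 2) / 4 * (rc - z) + \<epsilon> * (z + 1 + sqrt 2))"
  have Dpos: "1/10 \<le> z * (1 - z^2)"
  proof -
    have "z^2 \<le> (42/100)^2" using zb z rcb by (intro power_mono) auto
    then have "1/8 * (82/100) \<le> z * (1 - z^2)" using zb by (intro mult_mono) (auto simp: power_divide)
    then show ?thesis by simp
  qed
  have ident: "Wd z * (z * (1 - z^2)) = (rc - z) * X"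
  proof -
    have e2: "nn / sqrt 2 = nn * sqrt 2 / 2" by (simp add: field_simps s2)
    have "Wd z * (z * (1 - z^2)) = - (ss - nn / sqrt 2) * (1 - z^2) - (nn - ss) * z * (1 + z) + ss * z * (1 - z)"
      unfolding Wd_def using zb by (intro id_D) auto
    then have a0: "Wd z * (z * (1 - z^2)) = - (ss - nn * sqrt 2 / 2) * (1 - z^2) - (nn - ss) * z * (1 + z) + ss * z * (1 - z)"
      unfolding e2 .
    have a: "8 * (Wd z * (z * (1 - z^2))) = 4*(-(2 * ss - nn * sqrt 2)*(1-z^2) - 2*(nn - ss)*z*(1+z) + 2 * ss*z*(1-z))"
      unfolding a0 by (simp add: field_simps)
    have b: "8 * ((rc - z) * X) = 2*((sqrt 2-1) - z)*(-(nn*(2+sqrt 2)*((sqrt 2-1) - z) + (4* ss - (2+sqrt 2)*nn)*(z+1+sqrt 2)))"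
      unfolding X_def \<epsilon>_def rc_def by (simp add: field_simps s2)
    show ?thesis using a b id_N[of ss nn z] by simp
  qed
  have Xb: "\<bar>X\<bar> \<le> nn * h + 3 * \<bar>\<epsilon>\<bar>"
  proof -
    have a: "0 \<le> nn * (2 + sqrt 2) / 4 * (rc - z)" using z ss0 mm0 by auto
    have b: "nn * (2 + sqrt 2) / 4 * (rc - z) \<le> nn * h"
    proof -
      have "nn * (2 + sqrt 2) / 4 * (rc - z) = nn * ((2 + sqrt 2) / 4 * (rc - z))" by simp
      also have "\<dots> \<le> nn * (1 * h)"
        using sqrt2_bounds z dle ss0 mm0 by (intro mult_left_mono mult_mono) auto
      finally show ?thesis by simp
    qed
    have c: "\<bar>\<epsilon> * (z + 1 + sqrt 2)\<bar> \<le> \<bar>\<epsilon>\<bar> * 3"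
      using sqrt2_bounds zb z rcb by (simp add: abs_mult) (intro mult_left_mono, auto)
    show ?thesis unfolding X_def using a b c by linarith
  qed
  have "Wf r = (rc - r) * (rc - z) * (- X) / (z * (1 - z^2))"
  proof -
    have "Wf r = - (rc - r) * Wd z" using z(3) Wrc by (simp add: algebra_simps)
    also have "Wd z = (rc - z) * X / (z * (1 - z^2))"
    proof -
      have "z * (1 - z^2) \<noteq> 0" using Dpos by linarith
      then show ?thesis using ident by (simp add: eq_divide_eq)
    qed
    finally show ?thesis by (simp add: algebra_simps minus_divide_left)
  qed
  also have "\<dots> \<le> \<bar>(rc - r) * (rc - z) * (- X) / (z * (1 - z^2))\<bar>" by (rule abs_ge_self)
  also have "\<dots> = (rc - r) * (rc - z) * \<bar>X\<bar> / (z * (1 - z^2))"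
  proof -
    have "0 < z * (1 - z^2)" using Dpos by linarith
    then have "\<bar>z * (1 - z^2)\<bar> = z * (1 - z^2)" by simp
    then show ?thesis using z rlt by (simp add: abs_mult abs_divide)
  qed
  also have "\<dots> \<le> h * h * (nn * h + 3 * \<bar>\<epsilon>\<bar>) / (1/10)"
    using z rlt dle Xb Dpos by (intro frac_le mult_mono) auto
  also have "\<dots> = 10 * h^2 * (nn * h + 3 * \<bar>\<epsilon>\<bar>)" by (simp add: power2_eq_square)
  finally show ?thesis unfolding target \<epsilon>_def .
qed




lemma two_powr_le1: "(a::real) \<le> 0 \<Longrightarrow> 2 powr a \<le> 1"
  using powr_mono[of a 0 "2::real"] by simp

lemma main_bound:
  fixes n :: nat and L x \<xi> \<kappa> :: real
  assumes kdef: "\<kappa> = 20 * (\<bar>L\<bar> + 1)"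
    and knu: "\<kappa> \<le> real n powr (1/3)"
    and x0: "0 \<le> x"
  shows "norm (Q n L x \<xi>) \<le> 12 * exp (6 + 10 * (\<kappa>^3 + 3 * \<kappa>^2 * (\<bar>L\<bar> + 1)))
             * exp (- (2 powr (-5/6) * \<kappa>) * (x + \<xi>))"
proof -
  define \<nu> where "\<nu> = real n powr (1/3)"
  define N2 where "N2 = real n powr (2/3)"
  have k20: "20 \<le> \<kappa>" using kdef by simp
  have nu20: "20 \<le> \<nu>" using knu k20 by (simp add: \<nu>_def)
  have n0: "n \<noteq> 0" using nu20 by (cases "n = 0") (auto simp: \<nu>_def)
  have nu3: "\<nu>^3 = real n"
    using n0 by (simp add: \<nu>_def powr_power)
  have nu2: "\<nu>^2 = N2"
    using n0 by (simp add: \<nu>_def N2_def powr_power)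
  have nN: "real n = \<nu> * N2"
  proof -
    have "\<nu>^3 = \<nu> * \<nu>^2" by (simp add: power2_eq_square power3_eq_cube)
    then show ?thesis using nu3 nu2 by simp
  qed
  have N2ge: "400 \<le> N2"
  proof -
    have "20^2 \<le> \<nu>^2" using nu20 by (intro power_mono) auto
    then show ?thesis using nu2 by simp
  qed
  define h where "h = \<kappa> / \<nu>"
  have knu': "\<kappa> \<le> \<nu>" using knu by (simp add: \<nu>_def)
  have h0: "0 < h" using nu20 k20 by (simp add: h_def)
  have h1: "h \<le> 1" using nu20 knu' by (simp add: h_def divide_le_eq)
  have nuh: "\<nu> * h = \<kappa>" using nu20 by (simp add: h_def)
  have nh: "real n * h = \<kappa> * N2" using nN nuh by (simp add: mult_ac)
  have h2N2: "h^2 * N2 = \<kappa>^2"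
    using nuh nu2 by (metis power_mult_distrib mult.commute)
  define P where "P = \<bar>L\<bar> * N2"
  have P0: "0 \<le> P" using N2ge by (simp add: P_def)
  have nge: "20 * P + 20 * N2 \<le> real n"
  proof -
    have "\<kappa> * N2 \<le> \<nu> * N2" using knu' N2ge by (intro mult_right_mono) auto
    then show ?thesis using nN by (simp add: kdef P_def algebra_simps)
  qed
  define s where "s = \<lfloor>b n L / 2\<rfloor>"
  define Z where "Z = real n / sqrt 2"
  define G where "G = 2 powr (-1/6) * L * N2"
  have bdef: "b n L = real n + Z + G"
    by (simp add: b_def Z_def G_def N2_def algebra_simps)
  have sfl0: "(real n + Z + G) / 2 - 1 < real_of_int s" "real_of_int s \<le> (real n + Z + G) / 2"
    using floor_correct[of "b n L / 2"] unfolding s_def bdef by auto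
  have sfl: "real n + Z + G - 2 < 2 * real_of_int s" "2 * real_of_int s \<le> real n + Z + G"
    using sfl0 by (simp_all add: field_simps)
  have Gb: "\<bar>G\<bar> \<le> P"
  proof -
    have "\<bar>G\<bar> = 2 powr (-1/6) * (\<bar>L\<bar> * N2)" using N2ge by (simp add: G_def abs_mult)
    also have "\<dots> \<le> 1 * (\<bar>L\<bar> * N2)" using N2ge two_powr_le1[of "-1/6"] by (intro mult_right_mono) auto
    finally show ?thesis by (simp add: P_def)
  qed
  have Zb: "0 \<le> Z" "Z \<le> 71/100 * real n"
  proof -
    show "0 \<le> Z" by (simp add: Z_def)
    have "1 / sqrt 2 \<le> 71/100" using sqrt2_bounds by (simp add: field_simps)
    then have "real n * (1 / sqrt 2) \<le> real n * (71/100)" by (intro mult_left_mono) auto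
    then show "Z \<le> 71/100 * real n" by (simp add: Z_def mult.commute)
  qed
  have Gb2: "- P \<le> G" "G \<le> P" using Gb by (simp_all add: abs_le_iff)
  have "0 \<le> real_of_int s" using sfl Gb2 Zb nge P0 N2ge by linarith
  then have s0: "0 \<le> s" by simp
  have "real_of_int s \<le> real n" using sfl Gb2 Zb nge P0 N2ge by linarith
  then have sn: "s \<le> int n" by linarith
  define \<epsilon> where "\<epsilon> = real_of_int s - (2 + sqrt 2) / 4 * real n"
  have alpha: "2 * ((2 + sqrt 2) / 4 * real n) = real n + Z"
    by (simp add: Z_def field_simps s2)
  have epsb: "\<bar>\<epsilon>\<bar> \<le> P + 1" using sfl Gb2 alpha unfolding \<epsilon>_def abs_le_iff by linarith
  define rc where "rc = sqrt 2 - 1"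
  define r where "r = rc * exp (-h)"
  have rcb: "41/100 \<le> rc" "rc \<le> 42/100" using sqrt2_bounds by (auto simp: rc_def)
  have eh: "exp (-1) \<le> exp (-h)" "exp (-h) < 1" using h0 h1 by auto
  have e1: "1/3 \<le> exp (-1::real)" using exp_le by (simp add: exp_minus field_simps)
  have rlo: "1/8 \<le> r" 
  proof -
    have "1/3 \<le> exp (-h)" using eh e1 by linarith
    then have "41/100 * (1/3) \<le> rc * exp (-h)" using rcb by (intro mult_mono) auto
    then show ?thesis by (simp add: r_def)
  qed
  have rlt: "r < rc" using rcb eh by (simp add: r_def)
  define d where "d = rc - r"
  have dlo: "h / 5 \<le> d"
  proof -
    have "1 + h \<le> exp h" by (rule exp_ge_add_one_self)
    then have "exp (-h) \<le> 1 / (1 + h)" using h0 by (simp add: exp_minus field_simps)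
    then have "h / (1 + h) \<le> 1 - exp (-h)" using h0 by (simp add: field_simps)
    moreover have "h / 2 \<le> h / (1 + h)" using h0 h1 by (intro divide_left_mono) auto
    ultimately have "h / 2 \<le> 1 - exp (-h)" by linarith
    then have q: "41/100 * (h/2) \<le> rc * (1 - exp (-h))" using rcb h0 by (intro mult_mono) auto
    have "rc * (1 - exp (-h)) = d" by (simp add: d_def r_def algebra_simps)
    then show ?thesis using q h0 by linarith
  qed
  define M where "M = (real n - real_of_int s) * (1 + r)^2 - real_of_int s * (1 - r)^2"
  have M4: "4 * M = - 2 * (real n * d) * (sqrt 2 * (sqrt 2 + 1 - r)) - 8 * (\<epsilon> * (1 + r^2))"
  proof -
    have i: "4 * M = -2*real n * sqrt 2*((sqrt 2-1) - r)*(sqrt 2+1-r) - 2*(4*real_of_int s - (2+sqrt 2)*real n)*(1+r^2)"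
      using id_M[of "real n" "real_of_int s" r] by (simp add: M_def)
    have e8: "8*\<epsilon> = 2*(4*real_of_int s - (2+sqrt 2)*real n)" by (simp add: \<epsilon>_def field_simps)
    have a: "8*(\<epsilon>*(1+r^2)) = 2*(4*real_of_int s - (2+sqrt 2)*real n)*(1+r^2)"
      using e8 by (metis mult.assoc)
    have b: "2*(real n*d)*(sqrt 2*(sqrt 2+1-r)) = 2*real n * sqrt 2*((sqrt 2-1) - r)*(sqrt 2+1-r)"
      by (simp add: d_def rc_def mult_ac)
    show ?thesis using i a b by linarith
  qed
  have A1: "5/2 \<le> sqrt 2 * (sqrt 2 + 1 - r)"
  proof -
    have "141/100 * (141/100 + 1 - 42/100) \<le> sqrt 2 * (sqrt 2 + 1 - r)"
      using sqrt2_bounds rlt rcb by (intro mult_mono) auto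
    then show ?thesis by simp
  qed
  have A2: "\<kappa> * N2 / 5 \<le> real n * d"
  proof -
    have "real n * (h / 5) \<le> real n * d" using dlo by (intro mult_left_mono) auto
    then show ?thesis using nh by simp
  qed
  have A3: "\<kappa> * N2 \<le> 2 * (real n * d) * (sqrt 2 * (sqrt 2 + 1 - r))"
  proof -
    have "(\<kappa> * N2 / 5) * (5/2) \<le> (real n * d) * (sqrt 2 * (sqrt 2 + 1 - r))"
      using A1 A2 k20 N2ge rlt by (intro mult_mono) (auto simp: d_def)
    then show ?thesis by simp
  qed
  have A4: "\<bar>\<epsilon> * (1 + r^2)\<bar> \<le> 2 * \<bar>\<epsilon>\<bar>"
  proof -
    have "r^2 \<le> 1" using rlt rcb rlo by (simp add: power_le_one)
    then have "\<bar>\<epsilon> * (1 + r^2)\<bar> \<le> \<bar>\<epsilon>\<bar> * 2" by (simp add: abs_mult mult_left_mono)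
    then show ?thesis by simp
  qed
  have Mle: "M \<le> - N2"
  proof -
    have A4': "-(2*\<bar>\<epsilon>\<bar>) \<le> \<epsilon>*(1+r^2)" using A4 by (simp add: abs_le_iff)
    have kN: "\<kappa>*N2 = 20*P + 20*N2" by (simp add: kdef P_def algebra_simps)
    show ?thesis using M4 A3 A4' epsb kN N2ge by linarith
  qed
  define K where "K = - (r * M / (1 - r^2)^2)"
  have D2: "0 < (1 - r^2)^2" "(1 - r^2)^2 \<le> 1"
  proof -
    have "r^2 < 1" using rlt rcb rlo by (simp add: power_less_one_iff abs_less_iff) 
    moreover have "0 \<le> r^2" by simp
    ultimately show "0 < (1 - r^2)^2" "(1 - r^2)^2 \<le> 1" by (auto simp: power_le_one)
  qed
  have Kge: "N2 / 8 \<le> K"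
  proof -
    have x0': "0 \<le> r * (- M)" using rlo Mle N2ge by (intro mult_nonneg_nonneg) auto
    have "1/8 * N2 \<le> r * (- M)" using rlo Mle N2ge by (intro mult_mono) auto
    also have "\<dots> \<le> r * (- M) / (1 - r^2)^2"
    proof -
      have "r * (- M) * (1 - r^2)^2 \<le> r * (- M)" using D2 x0' by (intro mult_left_le) auto
      then show ?thesis by (simp only: pos_le_divide_eq[OF D2(1)])
    qed
    finally show ?thesis by (simp add: K_def)
  qed
  have Kpos: "0 < K" using Kge N2ge by linarith
  have sqK: "\<nu> / 3 \<le> sqrt K"
  proof (rule real_le_rsqrt)
    have "(\<nu> / 3)^2 = N2 / 9" using nu2 by (simp add: power_divide)
    then show "(\<nu> / 3)^2 \<le> K" using Kge N2ge by simp
  qed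
  have Jint: "(\<lambda>t. exp (- K * (1 - cos (2*pi*t)))) integrable_on {0..1}"
    using J_bound(1)[OF Kpos] .
  have Jle: "integral {0..1} (\<lambda>t. exp (- K * (1 - cos (2*pi*t)))) \<le> 12 / \<nu>"
  proof -
    have "4 / sqrt K \<le> 4 / (\<nu> / 3)" using sqK nu20 Kpos by (intro divide_left_mono) auto
    then show ?thesis using J_bound(2)[OF Kpos] by simp
  qed
  define m where "m = nat (int n - s)"
  define k where "k = nat s"
  have mR: "real m = real n - real_of_int s" using sn by (simp add: m_def)
  have kR: "real k = real_of_int s" using s0 by (simp add: k_def)
  define g where "g t = (1-r)^m * (1+r)^k * exp (- K * (1 - cos (2*pi*t)))" for t
  have r0: "0 < r" and r1: "r < 1" and r12: "r \<le> 1/2" using rlo rlt rcb by auto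
  have gle: "norm (1 - r * exp (2 * of_real pi * \<i> * of_real t)) ^ nat (int n - s) *
       norm (1 + r * exp (2 * of_real pi * \<i> * of_real t)) ^ nat s \<le> g t" for t
  proof -
    have e: "r * (1 - cos (2*pi*t)) * (real m*(1+r)^2 - real k*(1-r)^2) / (1-r^2)^2 = - K * (1 - cos (2*pi*t))"
      unfolding mR kR K_def M_def[symmetric] by (simp add: field_simps)
    show ?thesis using pw_bound[OF r0 r1, of t m k] unfolding e by (simp add: g_def m_def k_def)
  qed
  have gint: "g integrable_on {0..1}"
    unfolding g_def by (intro integrable_continuous_real continuous_intros)
  have intg: "integral {0..1} g = (1-r)^m * (1+r)^k * integral {0..1} (\<lambda>t. exp (- K * (1 - cos (2*pi*t))))"
    unfolding g_def by simp
  define y where "y = uidx n \<xi> + iidx n x"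
  have qb: "norm (q n s y) \<le> r powr (real_of_int (y - s)) * ((1-r)^m * (1+r)^k * (12 / \<nu>))"
  proof -
    have "norm (q n s y) \<le> r powr (real_of_int (y - s)) * integral {0..1} g"
      using q_bound[OF s0 sn r0 r12 gint gle] by blast
    also have "\<dots> \<le> r powr (real_of_int (y - s)) * ((1-r)^m * (1+r)^k * (12 / \<nu>))"
      unfolding intg using Jle r0 r1 by (intro mult_left_mono) auto
    finally show ?thesis .
  qed
  define i where "i = iidx n x"
  define u where "u = uidx n \<xi>"
  define X5 where "X5 = 2 powr (-5/6) * \<xi> * \<nu>"
  define E where "E = real_of_int i + X5 - G"
  define fi where "fi = 2 powr (-5/6) * x * \<nu> - real_of_int i"
  define fu where "fu = Z + X5 - real_of_int u"
  have i_eq: "i = \<lfloor>2 powr (-5/6) * x * \<nu>\<rfloor>" by (simp add: i_def iidx_def \<nu>_def)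
  have u_eq: "u = \<lfloor>Z + X5\<rfloor>" by (simp add: u_def uidx_def \<nu>_def Z_def X5_def)
  have fib: "0 \<le> fi" "fi < 1"
  proof -
    have "real_of_int i \<le> 2 powr (-5/6) * x * \<nu>" "2 powr (-5/6) * x * \<nu> < real_of_int i + 1"
      unfolding i_eq by linarith+
    then show "0 \<le> fi" "fi < 1" by (simp_all add: fi_def)
  qed
  have fub: "0 \<le> fu" "fu < 1"
  proof -
    have "real_of_int u \<le> Z + X5" "Z + X5 < real_of_int u + 1"
      unfolding u_eq by linarith+
    then show "0 \<le> fu" "fu < 1" by (simp_all add: fu_def)
  qed
  have yR: "real_of_int y = real_of_int u + real_of_int i" by (simp add: y_def u_def i_def)
  define P0 where "P0 = 2 powr (-5/6) * \<nu> * 2 powr (- real n / 2) * (sqrt 2 + 1) powr E"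
  have P0pos: "0 \<le> P0" by (simp add: P0_def \<nu>_def)
  have Qeq: "Q n L x \<xi> = complex_of_real P0 * q n s y"
    unfolding Q_def P0_def E_def X5_def G_def \<nu>_def N2_def i_def s_def y_def u_def ..
  have nQ: "norm (Q n L x \<xi>) = P0 * norm (q n s y)"
    using P0pos by (simp add: Qeq norm_mult)
  define T where "T = 2 powr (- real n / 2) * (sqrt 2 + 1) powr E * r powr (real_of_int (y - s)) * (1-r)^m * (1+r)^k"
  have QT: "norm (Q n L x \<xi>) \<le> 12 * 2 powr (-5/6) * T"
  proof -
    have "norm (Q n L x \<xi>) \<le> P0 * (r powr (real_of_int (y - s)) * ((1-r)^m * (1+r)^k * (12 / \<nu>)))"
      unfolding nQ using qb P0pos by (intro mult_left_mono) auto
    also have "\<dots> = 12 * 2 powr (-5/6) * T" using nu20 by (simp add: P0_def T_def field_simps)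
    finally show ?thesis .
  qed
  define lam where "lam = ln rc"
  define LN2 where "LN2 = ln (2::real)"
  define l1 where "l1 = ln (1 - r) - ln (1 - rc)"
  define l2 where "l2 = ln (1 + r) - ln (1 + rc)"
  have rcpos: "0 < rc" using rcb by auto
  have ln1: "ln (sqrt 2 + 1) = - lam"
  proof -
    have "(sqrt 2 + 1) * rc = 1" by (simp add: rc_def algebra_simps s2)
    moreover have "0 < sqrt 2 + (1::real)" using sqrt2_bounds by linarith
    ultimately have "ln (sqrt 2 + 1) + ln rc = 0" using rcpos ln_mult[of "sqrt 2 + 1" rc] by simp
    then show ?thesis by (simp add: lam_def)
  qed
  have ln2: "ln r = lam - h" using rcpos by (simp add: r_def ln_mult lam_def)
  have ln3: "ln (1 - rc) = LN2 / 2 + lam"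
  proof -
    have "1 - rc = sqrt 2 * rc" by (simp add: rc_def algebra_simps s2)
    then have "ln (1 - rc) = ln (sqrt 2) + ln rc" using rcpos by (simp add: ln_mult)
    then show ?thesis by (simp add: ln_sqrt LN2_def lam_def)
  qed
  have ln4: "ln (1 + rc) = LN2 / 2" by (simp add: rc_def ln_sqrt LN2_def)
  define \<Lambda> where "\<Lambda> = - real n / 2 * LN2 + E * ln (sqrt 2 + 1) + real_of_int (y - s) * ln r
      + real m * ln (1 - r) + real k * ln (1 + r)"
  have Texp: "T = exp \<Lambda>"
  proof -
    have a: "2 powr (- real n / 2) = exp (- real n / 2 * LN2)" by (simp add: powr_def LN2_def)
    have sp: "sqrt 2 + 1 \<noteq> (0::real)" using sqrt2_bounds by linarith
    have b: "(sqrt 2 + 1) powr E = exp (E * ln (sqrt 2 + 1))" using sp by (simp add: powr_def)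
    have c: "r powr (real_of_int (y - s)) = exp (real_of_int (y - s) * ln r)" using r0 by (simp add: powr_def)
    have d: "(1-r)^m = exp (real m * ln (1 - r))" using r1 by (simp add: exp_of_nat_mult)
    have e: "(1+r)^k = exp (real k * ln (1 + r))" using r0 by (simp add: exp_of_nat_mult)
    show ?thesis unfolding T_def \<Lambda>_def a b c d e exp_add ..
  qed
  define W where "W = (real_of_int s - Z) * h + (real n - real_of_int s) * l1 + real_of_int s * l2"
  have Wle: "W \<le> 10 * (\<kappa>^3 + 3 * \<kappa>^2 * (\<bar>L\<bar> + 1))"
  proof -
    have s0': "0 \<le> real_of_int s" using s0 by simp
    have sn': "real_of_int s \<le> real n" using sn by simp
    have "W \<le> 10 * h^2 * (real n * h + 3 * \<bar>\<epsilon>\<bar>)"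
      using W_bound[OF s0' sn' h0 h1, folded rc_def, folded r_def, folded Z_def l1_def l2_def \<epsilon>_def]
      unfolding W_def .
    also have "\<dots> = 10 * (h^2 * (real n * h) + 3 * (h^2 * \<bar>\<epsilon>\<bar>))" by (simp add: algebra_simps)
    also have "h^2 * (real n * h) = \<kappa>^3"
      using nh h2N2 by (metis mult.assoc mult.commute power3_eq_cube power2_eq_square)
    also have "h^2 * \<bar>\<epsilon>\<bar> \<le> h^2 * ((\<bar>L\<bar> + 1) * N2)"
      using epsb N2ge by (intro mult_left_mono) (auto simp: P_def algebra_simps)
    also have "h^2 * ((\<bar>L\<bar> + 1) * N2) = \<kappa>^2 * (\<bar>L\<bar> + 1)"
      using h2N2 by (metis mult.assoc mult.commute)
    finally show ?thesis by (simp add: algebra_simps)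
  qed
  define v where "v = real n + Z + G - 2 * real_of_int s - fu"
  have L1: "ln (1 - r) = l1 + LN2 / 2 + lam" using ln3 by (simp add: l1_def)
  have L2: "ln (1 + r) = l2 + LN2 / 2" using ln4 by (simp add: l2_def)
  have uR: "real_of_int u = Z + X5 - fu" by (simp add: fu_def)
  have yR2: "real_of_int y = Z + X5 - fu + real_of_int i" using yR uR by simp
  have Lameq: "\<Lambda> = lam * v - (real_of_int y - Z) * h + W"
    unfolding \<Lambda>_def ln1 ln2 mR kR L1 L2 of_int_diff yR2 v_def W_def E_def
    by (simp add: field_simps)
  have lamneg: "lam < 0" using rcpos rcb by (simp add: lam_def)
  have lamlo: "- 2 \<le> lam"
  proof -
    have "ln (sqrt 2 + 1) \<le> sqrt 2 + 1 - 1" using sqrt2_bounds by (intro ln_le_minus_one) linarith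
    then show ?thesis using ln1 sqrt2_bounds by linarith
  qed
  have vb: "- 1 < v" "v \<le> 2" unfolding v_def using sfl fub by linarith+
  have lv: "lam * v \<le> 2"
  proof (cases "0 \<le> v")
    case True
    then have "lam * v \<le> 0" using lamneg by (simp add: mult_nonpos_nonneg)
    then show ?thesis by simp
  next
    case False
    have "(- lam) * (- v) \<le> 2 * 1" using False vb lamneg lamlo by (intro mult_mono) auto
    then show ?thesis by simp
  qed
  have yZ: "(real_of_int y - Z) * h = 2 powr (-5/6) * \<kappa> * (x + \<xi>) - (fu + fi) * h"
  proof -
    have "real_of_int y - Z = 2 powr (-5/6) * \<nu> * (x + \<xi>) - fu - fi"
      using yR2 by (simp add: fi_def X5_def algebra_simps)
    then have "(real_of_int y - Z) * h = (2 powr (-5/6) * \<nu> * (x + \<xi>) - fu - fi) * h" by simp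
    also have "\<dots> = 2 powr (-5/6) * (\<nu> * h) * (x + \<xi>) - (fu + fi) * h"
      by (simp add: algebra_simps)
    finally have "(real_of_int y - Z) * h = 2 powr (-5/6) * (\<nu> * h) * (x + \<xi>) - (fu + fi) * h" .
    then show ?thesis unfolding nuh .
  qed
  have ff: "(fu + fi) * h \<le> 2 * 1" using fub fib h0 h1 by (intro mult_mono) auto
  have Lamle: "\<Lambda> \<le> 6 + 10 * (\<kappa>^3 + 3 * \<kappa>^2 * (\<bar>L\<bar> + 1)) - 2 powr (-5/6) * \<kappa> * (x + \<xi>)"
    using Lameq lv yZ ff Wle by linarith
  have "norm (Q n L x \<xi>) \<le> 12 * 2 powr (-5/6) * exp \<Lambda>" using QT Texp by simp
  also have "\<dots> \<le> 12 * 1 * exp (6 + 10 * (\<kappa>^3 + 3 * \<kappa>^2 * (\<bar>L\<bar> + 1)) - 2 powr (-5/6) * \<kappa> * (x + \<xi>))"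
    using two_powr_le1[of "-5/6"] Lamle by (intro mult_mono) auto
  also have "\<dots> = 12 * exp (6 + 10 * (\<kappa>^3 + 3 * \<kappa>^2 * (\<bar>L\<bar> + 1))) * exp (- (2 powr (-5/6) * \<kappa>) * (x + \<xi>))"
  proof -
    have ed: "exp (A - B) = exp A * exp (- B)" for A B :: real by (simp add: exp_diff exp_minus divide_inverse)
    show ?thesis unfolding ed by simp
  qed
  finally show ?thesis .
qed

theorem proposition5p4:
  fixes L :: real
  shows "\<exists>c>0. \<exists>C::real. \<forall>\<^sub>F n in sequentially.
           \<forall>x\<ge>0. \<forall>\<xi>::real. norm (Q n L x \<xi>) \<le> C * exp (- c * (x + \<xi>))"
proof -
  define \<kappa> where "\<kappa> = 20 * (\<bar>L\<bar> + 1)"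
  have k0: "0 < \<kappa>" by (simp add: \<kappa>_def add_nonneg_pos)
  have ev: "\<forall>\<^sub>F n in sequentially. \<kappa> \<le> real n powr (1/3)"
  proof (rule eventually_sequentiallyI[of "nat \<lceil>\<kappa>^3\<rceil>"])
    fix n assume "nat \<lceil>\<kappa>^3\<rceil> \<le> n"
    then have "\<kappa>^3 \<le> real n" by linarith
    then have "(\<kappa>^3) powr (1/3) \<le> real n powr (1/3)" using k0 by (intro powr_mono2) auto
    moreover have "(\<kappa>^3) powr (1/3) = \<kappa>"
    proof -
      have "\<kappa>^3 = \<kappa> powr 3" using powr_realpow[OF k0, of 3] by simp
      then have "(\<kappa>^3) powr (1/3) = \<kappa> powr (3 * (1/3))" by (simp add: powr_powr)
      then show ?thesis using k0 by simp
    qed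
    ultimately show "\<kappa> \<le> real n powr (1/3)" by simp
  qed
  show ?thesis
  proof (intro exI conjI)
    show "0 < 2 powr (-5/6) * \<kappa>" using k0 by simp
    show "\<forall>\<^sub>F n in sequentially. \<forall>x\<ge>0. \<forall>\<xi>::real. norm (Q n L x \<xi>) \<le>
       12 * exp (6 + 10 * (\<kappa>^3 + 3 * \<kappa>^2 * (\<bar>L\<bar> + 1))) * exp (- (2 powr (-5/6) * \<kappa>) * (x + \<xi>))"
      using ev by eventually_elim (use main_bound[OF \<kappa>_def] in blast)
  qed
qed

end
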